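(* Every $3$-dimensional Acaa-algebra over a field $\mathbb K$ of characteristic $0$ is isomorphic to one of the following: (1) the $3$-dimensional abelian algebra (all brackets zero); (2) the $3$-dimensional Heisenberg algebra $\mathfrak h_3$, given in a basis $\{e_1,e_2,e_3\}$ by $[e_1,e_2]=e_3$ and all other brackets of basis vectors (not determined by anticommutativity) zero.
   Context: An Acaa-algebra over a field $\mathbb K$ of characteristic $0$ is a $\mathbb K$-vector space $A$ with a bilinear product $[\cdot,\cdot]$ which is anticommutative, $[x,y]=-[y,x]$, and satisfies $[x_1,[x_2,x_3]]=[x_2,[x_3,x_1]]$ for all $x_1,x_2,x_3\in A$. Isomorphism means a linear bijection preserving the bracket. *)

theory Defs
  imports "HOL-Analysis.Analysis"
begin

definition bilinear_wrt :: "('k::field \<Rightarrow> 'v::ab_group_add \<Rightarrow> 'v) \<Rightarrow> ('v \<Rightarrow> 'v \<Rightarrow> 'v) \<Rightarrow> bool" where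
  "bilinear_wrt sc br \<longleftrightarrow>
     (\<forall>x. Vector_Spaces.linear sc sc (br x)) \<and>
     (\<forall>y. Vector_Spaces.linear sc sc (\<lambda>x. br x y))"

definition acaa_algebra :: "('k::field \<Rightarrow> 'v::ab_group_add \<Rightarrow> 'v) \<Rightarrow> ('v \<Rightarrow> 'v \<Rightarrow> 'v) \<Rightarrow> bool" where
  "acaa_algebra sc br \<longleftrightarrow>
     vector_space sc \<and> bilinear_wrt sc br \<and>
     (\<forall>x y. br x y = - br y x) \<and>
     (\<forall>x1 x2 x3. br x1 (br x2 x3) = br x2 (br x3 x1))"

definition algebra_iso ::
  "('k::field \<Rightarrow> 'v::ab_group_add \<Rightarrow> 'v) \<Rightarrow> ('v \<Rightarrow> 'v \<Rightarrow> 'v) \<Rightarrow>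
   ('k \<Rightarrow> 'w::ab_group_add \<Rightarrow> 'w) \<Rightarrow> ('w \<Rightarrow> 'w \<Rightarrow> 'w) \<Rightarrow> ('v \<Rightarrow> 'w) \<Rightarrow> bool" where
  "algebra_iso s1 br1 s2 br2 f \<longleftrightarrow>
     Vector_Spaces.linear s1 s2 f \<and> bij f \<and> (\<forall>x y. f (br1 x y) = br2 (f x) (f y))"

definition isomorphic_algebras ::
  "('k::field \<Rightarrow> 'v::ab_group_add \<Rightarrow> 'v) \<Rightarrow> ('v \<Rightarrow> 'v \<Rightarrow> 'v) \<Rightarrow>
   ('k \<Rightarrow> 'w::ab_group_add \<Rightarrow> 'w) \<Rightarrow> ('w \<Rightarrow> 'w \<Rightarrow> 'w) \<Rightarrow> bool" where
  "isomorphic_algebras s1 br1 s2 br2 \<longleftrightarrow> (\<exists>f. algebra_iso s1 br1 s2 br2 f)"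

text \<open>The model space K^3 (triples), with coordinatewise scalar multiplication;
  standard basis e1=(1,0,0), e2=(0,1,0), e3=(0,0,1).\<close>
definition kscale3 :: "'k::field \<Rightarrow> 'k \<times> 'k \<times> 'k \<Rightarrow> 'k \<times> 'k \<times> 'k" where
  "kscale3 c v = (c * fst v, c * fst (snd v), c * snd (snd v))"

definition abelian3 :: "'k::field \<times> 'k \<times> 'k \<Rightarrow> 'k \<times> 'k \<times> 'k \<Rightarrow> 'k \<times> 'k \<times> 'k" where
  "abelian3 x y = 0"

definition heis3 :: "'k::field \<times> 'k \<times> 'k \<Rightarrow> 'k \<times> 'k \<times> 'k \<Rightarrow> 'k \<times> 'k \<times> 'k" where
  "heis3 x y = (0, 0, fst x * fst (snd y) - fst (snd x) * fst y)"

end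

theory Submission
  imports Defs
begin

lemma half_zero:
  fixes sc :: "'k::field_char_0 \<Rightarrow> 'v::ab_group_add \<Rightarrow> 'v"
  assumes "vector_space sc" and "(w::'v) + w = 0"
  shows "w = 0"
proof -
  interpret vector_space sc by fact
  have "w = sc 1 w" by simp
  also have "\<dots> = sc (1/2 + 1/2) w" by simp
  also have "\<dots> = sc (1/2) (w + w)" by (simp only: scale_left_distrib scale_right_distrib)
  also have "\<dots> = 0" using assms(2) by simp
  finally show ?thesis .
qed

lemma indep3:
  fixes sc :: "'k::field \<Rightarrow> 'v::ab_group_add \<Rightarrow> 'v"
  assumes "vector_space sc"
    and ind: "\<And>x y z. sc x a + sc y b + sc z c = 0 \<Longrightarrow> x = 0 \<and> y = 0 \<and> z = 0"
    and d: "a \<noteq> b" "b \<noteq> c" "a \<noteq> c"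
  shows "\<not> module.dependent sc {a,b,c}"
proof -
  interpret vector_space sc by fact
  show ?thesis
  proof (rule independent_if_scalars_zero)
    show "finite {a,b,c}" by simp
    fix f x assume s: "(\<Sum>x\<in>{a,b,c}. sc (f x) x) = 0" and x: "x \<in> {a,b,c}"
    from s d have "sc (f a) a + sc (f b) b + sc (f c) c = 0" by (simp add: add.assoc)
    from ind[OF this] x show "f x = 0" by auto
  qed
qed

lemma span3:
  fixes sc :: "'k::field \<Rightarrow> 'v::ab_group_add \<Rightarrow> 'v"
  assumes "vector_space sc"
    and dim: "vector_space.dim sc (UNIV :: 'v set) = 3"
    and ind: "\<not> module.dependent sc {a,b,c}"
    and d: "a \<noteq> b" "b \<noteq> c" "a \<noteq> c"
  shows "\<exists>x y z. v = sc x a + sc y b + sc z c"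
proof -
  interpret vector_space sc by fact
  obtain B where B: "independent B" "UNIV \<subseteq> span B" "card B = 3"
    using basis_exists[of UNIV] dim by auto
  have fB: "finite B" using B(3) by (metis card.infinite zero_neq_numeral)
  have vs: "v \<in> span {a,b,c}"
  proof (rule ccontr)
    assume nv: "v \<notin> span {a,b,c}"
    then have i4: "independent (insert v {a,b,c})" using ind by (rule independent_insertI)
    have "v \<notin> {a,b,c}" using nv span_base[of v "{a,b,c}"] by blast
    then have c4: "card (insert v {a,b,c}) = 4" using d by simp
    have "insert v {a,b,c} \<subseteq> span B" using B(2) by blast
    from independent_span_bound[OF fB i4 this] have "card (insert v {a,b,c}) \<le> card B" by blast
    then show False using B(3) c4 by simp
  qed
  obtain x where x: "v - sc x a \<in> span {b,c}" using vs span_breakdown_eq[of v a "{b,c}"] by blast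
  obtain y where y: "v - sc x a - sc y b \<in> span {c}" using x span_breakdown_eq[of "v - sc x a" b "{c}"] by blast
  obtain z where "v - sc x a - sc y b - sc z c \<in> span {}" using y span_breakdown_eq[of "v - sc x a - sc y b" c "{}"] by blast
  then have "v - sc x a - sc y b - sc z c = 0" by simp
  then have "v = sc x a + sc y b + sc z c" by (simp add: algebra_simps)
  then show ?thesis by blast
qed

definition g3 :: "('k \<Rightarrow> 'v \<Rightarrow> 'v) \<Rightarrow> 'v \<Rightarrow> 'v \<Rightarrow> 'v \<Rightarrow> 'k \<times> 'k \<times> 'k \<Rightarrow> 'v::ab_group_add" where
  "g3 sc a b c p = sc (fst p) a + sc (fst (snd p)) b + sc (snd (snd p)) c"

lemma iso3:
  fixes sc :: "'k::field \<Rightarrow> 'v::ab_group_add \<Rightarrow> 'v"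
  assumes vs: "vector_space sc"
    and ind: "\<And>x y z. sc x a + sc y b + sc z c = 0 \<Longrightarrow> x = 0 \<and> y = 0 \<and> z = 0"
    and sp: "\<And>v. \<exists>x y z. v = sc x a + sc y b + sc z c"
    and brg: "\<And>p q. br (g3 sc a b c p) (g3 sc a b c q) = g3 sc a b c (B p q)"
  shows "isomorphic_algebras sc br kscale3 B"
proof -
  interpret vector_space sc by fact
  let ?g = "g3 sc a b c"
  have gadd: "?g (p + q) = ?g p + ?g q" for p q
    by (simp add: g3_def scale_left_distrib algebra_simps)
  have gsc: "?g (kscale3 k p) = sc k (?g p)" for k p
    by (simp add: g3_def kscale3_def scale_right_distrib)
  have inj: "inj ?g"
  proof (rule injI)
    fix p q assume "?g p = ?g q"
    then have "sc (fst p - fst q) a + sc (fst (snd p) - fst (snd q)) b + sc (snd (snd p) - snd (snd q)) c = 0"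
      by (simp add: g3_def scale_left_diff_distrib algebra_simps)
    from ind[OF this] show "p = q" by (simp add: prod_eq_iff)
  qed
  have surj: "surj ?g"
  proof (rule surjI)
    fix v show "?g (SOME p. ?g p = v) = v"
    proof (rule someI_ex)
      obtain x y z where "v = sc x a + sc y b + sc z c" using sp by blast
      then show "\<exists>p. ?g p = v" by (auto simp: g3_def intro!: exI[of _ "(x,y,z)"])
    qed
  qed
  have bij: "bij ?g" using inj surj by (simp add: bij_def)
  define f where "f = inv ?g"
  have fg: "f (?g p) = p" for p using inj by (simp add: f_def)
  have gf: "?g (f v) = v" for v using surj by (simp add: f_def surj_f_inv_f)
  have vs2: "vector_space (kscale3 :: 'k \<Rightarrow> _)"
    by (unfold_locales) (auto simp: kscale3_def algebra_simps)
  have lin: "Vector_Spaces.linear sc kscale3 f"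
    unfolding Vector_Spaces.linear_iff
  proof (intro conjI allI)
    show "vector_space sc" by fact
    show "vector_space (kscale3 :: 'k \<Rightarrow> _)" by fact
    fix x y show "f (x + y) = f x + f y"
      by (metis fg gadd gf)
  next
    fix k x show "f (sc k x) = kscale3 k (f x)"
      by (metis fg gsc gf)
  qed
  have "bij f" unfolding f_def using bij by (simp add: bij_imp_bij_inv)
  moreover have "f (br x y) = B (f x) (f y)" for x y
    by (metis brg fg gf)
  ultimately show ?thesis unfolding isomorphic_algebras_def algebra_iso_def using lin by blast
qed


lemma heis_expand:
  fixes sc :: "'k::field_char_0 \<Rightarrow> 'v::ab_group_add \<Rightarrow> 'v"
  assumes "vector_space sc"
  and badd: "\<And>x y z. br x (y + z) = br x y + br x z" "\<And>x y z. br (x + y) z = br x z + br y z"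
    "\<And>x k y. br x (sc k y) = sc k (br x y)" "\<And>k x y. br (sc k x) y = sc k (br x y)"
  and aa: "br a a = 0" "br b b = 0" "br c c = 0"
  and o: "br a c = 0" "br b c = 0" "br b a = - c" "br c a = 0" "br c b = 0" "br a b = c"
  shows "br (g3 sc a b c (s,t,u)) (g3 sc a b c (s',t',u')) = g3 sc a b c (heis3 (s,t,u) (s',t',u'))"
proof -
  interpret vector_space sc by fact
  have "br (g3 sc a b c (s,t,u)) (g3 sc a b c (s',t',u')) = sc s' (sc t (- c)) + sc t' (sc s c)"
    by (simp only: g3_def fst_conv snd_conv badd aa o scale_zero_right add_0_left add_0_right)
  also have "\<dots> = sc (s * t' - t * s') c"
    by (simp add: scale_scale scale_left_diff_distrib mult.commute)
  also have "\<dots> = g3 sc a b c (heis3 (s,t,u) (s',t',u'))"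
    by (simp add: g3_def heis3_def)
  finally show ?thesis .
qed

lemma acaa_facts:
  fixes sc :: "'k::field_char_0 \<Rightarrow> 'v::ab_group_add \<Rightarrow> 'v"
  assumes "acaa_algebra sc br"
  shows "vector_space sc"
    and "\<And>x y z. br x (y + z) = br x y + br x z"
    and "\<And>x y z. br (x + y) z = br x z + br y z"
    and "\<And>x k y. br x (sc k y) = sc k (br x y)"
    and "\<And>x k y. br (sc k x) y = sc k (br x y)"
    and "\<And>x y. br x y = - br y x"
    and "\<And>x. br x x = 0"
    and "\<And>x y. br x (br x y) = 0"
    and "\<And>x y. br x (- y) = - br x y"
proof -
  have A: "vector_space sc" "\<forall>x. Vector_Spaces.linear sc sc (br x)"
     "\<forall>y. Vector_Spaces.linear sc sc (\<lambda>x. br x y)"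
     "\<forall>x y. br x y = - br y x" "\<forall>x1 x2 x3. br x1 (br x2 x3) = br x2 (br x3 x1)"
    using assms unfolding acaa_algebra_def bilinear_wrt_def by blast+
  show "vector_space sc" by (fact A)
  show "\<And>x y z. br x (y + z) = br x y + br x z"
    using A(2) unfolding Vector_Spaces.linear_iff by blast
  show "\<And>x y z. br (x + y) z = br x z + br y z"
    using A(3) unfolding Vector_Spaces.linear_iff by blast
  show "\<And>x k y. br x (sc k y) = sc k (br x y)"
    using A(2) unfolding Vector_Spaces.linear_iff by blast
  show "\<And>x k y. br (sc k x) y = sc k (br x y)"
    using A(3) unfolding Vector_Spaces.linear_iff by blast
  show "\<And>x y. br x y = - br y x" using A(4) by blast
  show "\<And>x. br x x = 0"
  proof -
    fix x have "br x x + br x x = 0" using A(4) by (metis add.right_inverse)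
    then show "br x x = 0" using half_zero[OF A(1)] by blast
  qed
  have add: "\<And>x y z. br x (y + z) = br x y + br x z"
    using A(2) unfolding Vector_Spaces.linear_iff by blast
  show neg: "\<And>x y. br x (- y) = - br x y"
  proof -
    fix x y
    have "br x (- y) + br x y = br x (- y + y)" by (simp only: add)
    also have "\<dots> = br x 0" by simp
    also have "br x 0 = 0"
    proof -
      have "br x 0 = br x (0 + 0)" by simp
      also have "\<dots> = br x 0 + br x 0" by (simp only: add)
      finally show ?thesis by simp
    qed
    finally show "br x (- y) = - br x y" by (simp add: eq_neg_iff_add_eq_0)
  qed
  show "\<And>x y. br x (br x y) = 0"
  proof -
    fix x y
    have "br x (br x y) = br x (br y x)" using A(5) by blast
    also have "\<dots> = br x (- br x y)" using A(4) by metis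
    also have "\<dots> = - br x (br x y)" by (rule neg)
    finally have "br x (br x y) + br x (br x y) = 0" by (metis add.right_inverse)
    then show "br x (br x y) = 0" using half_zero[OF A(1)] by blast
  qed
qed

theorem mainTheorem3:
  fixes sc :: "'k::field_char_0 \<Rightarrow> 'v::ab_group_add \<Rightarrow> 'v"
    and br :: "'v \<Rightarrow> 'v \<Rightarrow> 'v"
  assumes "acaa_algebra sc br"
    and "vector_space.dim sc (UNIV :: 'v set) = 3"
  shows "isomorphic_algebras sc br kscale3 abelian3 \<or>
         isomorphic_algebras sc br kscale3 heis3"
proof -
  note F = acaa_facts[OF assms(1)]
  interpret vector_space sc by (fact F(1))
  have badd: "br x (y + z) = br x y + br x z" "br (x + y) z = br x z + br y z"
    "br x (sc k y) = sc k (br x y)" "br (sc k x) y = sc k (br x y)" for x y z k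
    using F by blast+
  show ?thesis
  proof (cases "\<forall>x y. br x y = 0")
    case True
    obtain B where B: "independent B" "UNIV \<subseteq> span B" "card B = 3"
      using basis_exists[of UNIV] assms(2) by auto
    then obtain a b c where abc: "B = {a,b,c}" "a \<noteq> b" "b \<noteq> c" "a \<noteq> c"
      by (auto simp: card_3_iff)
    have ind: "x = 0 \<and> y = 0 \<and> z = 0" if h: "sc x a + sc y b + sc z c = 0" for x y z
    proof -
      define u where "u v = (if v = a then x else if v = b then y else z)" for v
      have S: "(\<Sum>v\<in>{a,b,c}. sc (u v) v) = 0" using h abc by (simp add: u_def add.assoc)
      have "u v = 0" if "v \<in> {a,b,c}" for v
        using independentD[OF B(1), of "{a,b,c}" u v] abc that S by simp
      then have "u a = 0" "u b = 0" "u c = 0" by auto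
      then show ?thesis using abc by (simp add: u_def)
    qed
    have sp: "\<exists>x y z. v = sc x a + sc y b + sc z c" for v
      using span3[OF F(1) assms(2)] B abc by blast
    have "isomorphic_algebras sc br kscale3 abelian3"
    proof (rule iso3[OF F(1) ind sp])
      fix p q :: "'k \<times> 'k \<times> 'k"
      have "g3 sc a b c (abelian3 p q) = sc 0 a + sc 0 b + sc 0 c"
        by (simp only: abelian3_def g3_def zero_prod_def fst_conv snd_conv)
      also have "\<dots> = 0" by simp
      finally show "br (g3 sc a b c p) (g3 sc a b c q) = g3 sc a b c (abelian3 p q)"
        using True by simp
    qed
    then show ?thesis by blast
  next
    case False
    then obtain a b where nz: "br a b \<noteq> 0" by blast
    define c where "c = br a b"
    have c0: "c \<noteq> 0" using nz c_def by simp
    have br0: "br x 0 = 0" for x using badd(3)[of x 0 x] by simp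
    have ac: "br a c = 0" unfolding c_def by (rule F(8))
    have bc: "br b c = 0"
    proof -
      have "br b c = br b (- br b a)" using F(6)[of a b] c_def by simp
      also have "\<dots> = - br b (br b a)" by (rule F(9))
      finally show ?thesis using F(8)[of b a] by simp
    qed
    have ba: "br b a = - c" unfolding c_def by (rule F(6))
    have ca: "br c a = 0" using F(6)[of c a] ac by simp
    have cb: "br c b = 0" using F(6)[of c b] bc by simp
    have aa: "br a a = 0" "br b b = 0" "br c c = 0" by (rule F(7))+
    have ab: "br a b = c" by (simp add: c_def)
    have ind: "x = 0 \<and> y = 0 \<and> z = 0" if h: "sc x a + sc y b + sc z c = 0" for x y z
    proof -
      have "br a (sc x a + sc y b + sc z c) = 0" using h br0 by simp
      then have "sc y c = 0" by (simp only: badd aa ac ab scale_zero_right add_0_left add_0_right)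
      then have y: "y = 0" using c0 by simp
      have "br b (sc x a + sc y b + sc z c) = 0" using h br0 by simp
      then have "sc x (- c) = 0" by (simp only: badd aa bc ba scale_zero_right add_0_left add_0_right)
      then have x: "x = 0" using c0 by simp
      then have "sc z c = 0" using h y by simp
      then have "z = 0" using c0 by simp
      then show ?thesis using x y by simp
    qed
    have d: "a \<noteq> b" "b \<noteq> c" "a \<noteq> c"
    proof -
      show "a \<noteq> b" using nz aa(1) by auto
      show "b \<noteq> c"
      proof
        assume "b = c" then have "c = br a c" using c_def by simp
        with ac c0 show False by simp
      qed
      show "a \<noteq> c"
      proof
        assume "a = c" then have "br b c = - c" using ba by simp
        with bc c0 show False by simp
      qed
    qed
    have sp: "\<exists>x y z. v = sc x a + sc y b + sc z c" for v
      using span3[OF F(1) assms(2) indep3[OF F(1) ind d] d] by blast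
    have "isomorphic_algebras sc br kscale3 heis3"
    proof (rule iso3[OF F(1) ind sp])
      fix p q :: "'k \<times> 'k \<times> 'k"
      obtain s t u where p: "p = (s,t,u)" by (cases p) auto
      obtain s' t' u' where q: "q = (s',t',u')" by (cases q) auto
      show "br (g3 sc a b c p) (g3 sc a b c q) = g3 sc a b c (heis3 p q)"
        unfolding p q by (rule heis_expand[OF F(1) badd aa ac bc ba ca cb ab])
    qed
    then show ?thesis by blast
  qed
qed

end
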